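(* Let $F=C^\infty(]0,1[,\mathbb{R})$ with the Fr\'echet topology given by the seminorms $\|f\|_{n,k}=\sup_{\frac{1}{n+1}\le x\le\frac{n}{n+1}}|f^{(k)}(x)|$, $(n,k)\in\mathbb{N}^*\times\mathbb{N}$. Let $\mathcal{A}=\{f\in C^\infty(]0,1[,]0,1[)\mid \lim_{x\to1}f(x)=1,\ \lim_{x\to0}f(x)=0\}$ and $\mathcal{D}=\{f\in\mathcal{A}\mid \inf_{x\in]0,1[}f'(x)>0 \text{ and } \sup_{x\in]0,1[}f'(x)>0\}$, with the topology induced by $F$. Then $\mathcal{D}$ is contractible. *)

theory Defs
  imports "HOL-Analysis.Analysis"
begin

text \<open>Elements of C^infinity(]0,1[, R) are represented as functions real => real that
  vanish outside ]0,1[ (so that each smooth function on ]0,1[ has a unique representative)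
  and all of whose iterated derivatives are differentiable at every point of ]0,1[.\<close>

definition Cinf01 :: "(real \<Rightarrow> real) set" where
  "Cinf01 = {f. (\<forall>x. x \<notin> {0<..<1} \<longrightarrow> f x = 0) \<and>
                 (\<forall>k. \<forall>x\<in>{0<..<1}. ((deriv ^^ k) f) differentiable (at x))}"

definition seminorm01 :: "nat \<Rightarrow> nat \<Rightarrow> (real \<Rightarrow> real) \<Rightarrow> real" where
  "seminorm01 n k f = (SUP x\<in>{1 / (real n + 1) .. real n / (real n + 1)}. \<bar>(deriv ^^ k) f x\<bar>)"

definition Frechet01 :: "(real \<Rightarrow> real) topology" where
  "Frechet01 = topology (\<lambda>U. U \<subseteq> Cinf01 \<and>
     (\<forall>f\<in>U. \<exists>S::(nat \<times> nat) set. \<exists>e>0. finite S \<and> (\<forall>(n,k)\<in>S. n \<ge> 1) \<and>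
        (\<forall>g\<in>Cinf01. (\<forall>(n,k)\<in>S. seminorm01 n k (\<lambda>x. g x - f x) < e) \<longrightarrow> g \<in> U)))"

definition A01 :: "(real \<Rightarrow> real) set" where
  "A01 = {f \<in> Cinf01. (\<forall>x\<in>{0<..<1}. f x \<in> {0<..<1}) \<and>
                      (f \<longlongrightarrow> 1) (at_left 1) \<and> (f \<longlongrightarrow> 0) (at_right 0)}"

definition D01 :: "(real \<Rightarrow> real) set" where
  "D01 = {f \<in> A01. (INF x\<in>{0<..<1}. ereal (deriv f x)) > 0 \<and>
                    (SUP x\<in>{0<..<1}. ereal (deriv f x)) > 0}"

end

theory Submission
  imports Defs
begin

lemma local_deriv:
  assumes "\<forall>y\<in>{0<..<1::real}. F y = G y" "x \<in> {0<..<1}" "(G has_real_derivative D) (at x)"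
  shows "(F has_real_derivative D) (at x)"
  using has_field_derivative_transform_within_open[OF assms(3), of "{0<..<1}" F] assms by auto

lemma comb_derivs:
  assumes f: "f \<in> Cinf01" and g: "g \<in> Cinf01"
  shows "\<forall>x\<in>{0<..<1}. (deriv ^^ k) (\<lambda>x. a * f x + b * g x) x
           = a * (deriv ^^ k) f x + b * (deriv ^^ k) g x"
proof (induction k)
  case 0 then show ?case by simp
next
  case (Suc k)
  show ?case
  proof
    fix x :: real assume x: "x \<in> {0<..<1}"
    have df: "((deriv ^^ k) f has_real_derivative deriv ((deriv ^^ k) f) x) (at x)"
      using f x unfolding Cinf01_def by (auto simp: DERIV_deriv_iff_real_differentiable)
    have dg: "((deriv ^^ k) g has_real_derivative deriv ((deriv ^^ k) g) x) (at x)"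
      using g x unfolding Cinf01_def by (auto simp: DERIV_deriv_iff_real_differentiable)
    have "((\<lambda>y. a * (deriv ^^ k) f y + b * (deriv ^^ k) g y) has_real_derivative
            a * deriv ((deriv ^^ k) f) x + b * deriv ((deriv ^^ k) g) x) (at x)"
      by (rule DERIV_add[OF DERIV_cmult[OF df] DERIV_cmult[OF dg]])
    then have "((deriv ^^ k) (\<lambda>x. a * f x + b * g x) has_real_derivative
            a * deriv ((deriv ^^ k) f) x + b * deriv ((deriv ^^ k) g) x) (at x)"
      by (rule local_deriv[OF Suc.IH x])
    then show "(deriv ^^ Suc k) (\<lambda>x. a * f x + b * g x) x =
         a * (deriv ^^ Suc k) f x + b * (deriv ^^ Suc k) g x"
      by (simp add: DERIV_imp_deriv)
  qed
qed
lemma comb_Cinf: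
  assumes f: "f \<in> Cinf01" and g: "g \<in> Cinf01"
  shows "(\<lambda>x. a * f x + b * g x) \<in> Cinf01"
proof -
  have "((deriv ^^ k) (\<lambda>x. a * f x + b * g x)) differentiable (at x)" if x: "x \<in> {0<..<1}" for k x
  proof -
    have df: "((deriv ^^ k) f has_real_derivative deriv ((deriv ^^ k) f) x) (at x)"
      using f x unfolding Cinf01_def by (auto simp: DERIV_deriv_iff_real_differentiable)
    have dg: "((deriv ^^ k) g has_real_derivative deriv ((deriv ^^ k) g) x) (at x)"
      using g x unfolding Cinf01_def by (auto simp: DERIV_deriv_iff_real_differentiable)
    have "((\<lambda>y. a * (deriv ^^ k) f y + b * (deriv ^^ k) g y) has_real_derivative
            a * deriv ((deriv ^^ k) f) x + b * deriv ((deriv ^^ k) g) x) (at x)"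
      by (rule DERIV_add[OF DERIV_cmult[OF df] DERIV_cmult[OF dg]])
    then have "((deriv ^^ k) (\<lambda>x. a * f x + b * g x) has_real_derivative
            a * deriv ((deriv ^^ k) f) x + b * deriv ((deriv ^^ k) g) x) (at x)"
      by (rule local_deriv[OF comb_derivs[OF f g] x])
    then show ?thesis using real_differentiable_def by blast
  qed
  then show ?thesis using f g unfolding Cinf01_def by auto
qed

lemma diff_Cinf: "f \<in> Cinf01 \<Longrightarrow> g \<in> Cinf01 \<Longrightarrow> (\<lambda>x. f x - g x) \<in> Cinf01"
  using comb_Cinf[of f g 1 "-1"] by simp

lemma Icc_props:
  assumes "n \<ge> (1::nat)"
  shows "{1 / (real n + 1) .. real n / (real n + 1)} \<subseteq> {0<..<1}"
    and "{1 / (real n + 1) .. real n / (real n + 1)} \<noteq> {}"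
proof -
  have "real n \<ge> 1" using assms by simp
  have a: "0 < 1 / (real n + 1)" by simp
  have b: "real n / (real n + 1) < 1" by simp
  show "{1 / (real n + 1) .. real n / (real n + 1)} \<subseteq> {0<..<1}"
  proof
    fix x assume "x \<in> {1 / (real n + 1) .. real n / (real n + 1)}"
    then have h1: "1 / (real n + 1) \<le> x" and h2: "x \<le> real n / (real n + 1)" by auto
    have "0 < x" using a h1 by linarith
    moreover have "x < 1" using b h2 by linarith
    ultimately show "x \<in> {0<..<1}" by simp
  qed
  show "{1 / (real n + 1) .. real n / (real n + 1)} \<noteq> {}"
    using \<open>real n \<ge> 1\<close> by (auto simp: divide_right_mono)
qed

lemma sn_bdd:
  assumes f: "f \<in> Cinf01" and n: "n \<ge> (1::nat)"
  shows "bdd_above ((\<lambda>x. \<bar>(deriv ^^ k) f x\<bar>) ` {1 / (real n + 1) .. real n / (real n + 1)})"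
proof -
  let ?I = "{1 / (real n + 1) .. real n / (real n + 1)}"
  have "continuous_on ?I ((deriv ^^ k) f)"
  proof (rule continuous_at_imp_continuous_on, intro ballI)
    fix x assume "x \<in> ?I"
    then have "x \<in> {0<..<1}" using Icc_props(1)[OF n] by blast
    then show "isCont ((deriv ^^ k) f) x"
      using f unfolding Cinf01_def by (auto intro: differentiable_imp_continuous_within)
  qed
  then have "continuous_on ?I (\<lambda>x. \<bar>(deriv ^^ k) f x\<bar>)"
    by (intro continuous_intros)
  then have "compact ((\<lambda>x. \<bar>(deriv ^^ k) f x\<bar>) ` ?I)"
    by (intro compact_continuous_image) auto
  then show ?thesis by (intro bounded_imp_bdd_above compact_imp_bounded)
qed

lemma sn_upper:
  assumes f: "f \<in> Cinf01" and n: "n \<ge> (1::nat)"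
    and x: "x \<in> {1 / (real n + 1) .. real n / (real n + 1)}"
  shows "\<bar>(deriv ^^ k) f x\<bar> \<le> seminorm01 n k f"
  unfolding seminorm01_def by (rule cSUP_upper[OF x sn_bdd[OF f n]])

lemma sn_nonneg:
  assumes f: "f \<in> Cinf01" and n: "n \<ge> (1::nat)"
  shows "0 \<le> seminorm01 n k f"
proof -
  obtain x where "x \<in> {1 / (real n + 1) .. real n / (real n + 1)}"
    using Icc_props(2)[OF n] by blast
  from sn_upper[OF f n this, of k] show ?thesis by linarith
qed

lemma sn_comb:
  assumes f: "f \<in> Cinf01" and g: "g \<in> Cinf01" and n: "n \<ge> (1::nat)"
  shows "seminorm01 n k (\<lambda>x. a * f x + b * g x) \<le> \<bar>a\<bar> * seminorm01 n k f + \<bar>b\<bar> * seminorm01 n k g"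
  unfolding seminorm01_def[of n k "(\<lambda>x. a * f x + b * g x)"]
proof (rule cSUP_least[OF Icc_props(2)[OF n]])
  fix x assume x: "x \<in> {1 / (real n + 1) .. real n / (real n + 1)}"
  then have x01: "x \<in> {0<..<1}" using Icc_props(1)[OF n] by blast
  have "\<bar>(deriv ^^ k) (\<lambda>x. a * f x + b * g x) x\<bar> = \<bar>a * (deriv ^^ k) f x + b * (deriv ^^ k) g x\<bar>"
    using comb_derivs[OF f g] x01 by simp
  also have "\<dots> \<le> \<bar>a\<bar> * \<bar>(deriv ^^ k) f x\<bar> + \<bar>b\<bar> * \<bar>(deriv ^^ k) g x\<bar>"
    by (metis abs_mult abs_triangle_ineq)
  also have "\<dots> \<le> \<bar>a\<bar> * seminorm01 n k f + \<bar>b\<bar> * seminorm01 n k g"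
    by (intro add_mono mult_left_mono sn_upper[OF f n x] sn_upper[OF g n x]) auto
  finally show "\<bar>(deriv ^^ k) (\<lambda>x. a * f x + b * g x) x\<bar> \<le> \<bar>a\<bar> * seminorm01 n k f + \<bar>b\<bar> * seminorm01 n k g" .
qed

lemma sn_zero:
  assumes n: "n \<ge> (1::nat)"
  shows "seminorm01 n k (\<lambda>x. 0) = 0"
proof -
  have "(deriv ^^ k) (\<lambda>x::real. 0::real) = (\<lambda>x. 0)"
    by (induction k) auto
  then show ?thesis unfolding seminorm01_def using Icc_props(2)[OF n] by simp
qed


definition FP :: "(real \<Rightarrow> real) set \<Rightarrow> bool" where
  "FP = (\<lambda>U. U \<subseteq> Cinf01 \<and>
     (\<forall>f\<in>U. \<exists>S::(nat \<times> nat) set. \<exists>e>0. finite S \<and> (\<forall>(n,k)\<in>S. n \<ge> 1) \<and>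
        (\<forall>g\<in>Cinf01. (\<forall>(n,k)\<in>S. seminorm01 n k (\<lambda>x. g x - f x) < e) \<longrightarrow> g \<in> U)))"

definition NB :: "(real \<Rightarrow> real) set \<Rightarrow> (real \<Rightarrow> real) \<Rightarrow> bool" where
  "NB U f = (\<exists>S::(nat \<times> nat) set. \<exists>e>0. finite S \<and> (\<forall>(n,k)\<in>S. n \<ge> 1) \<and>
        (\<forall>g\<in>Cinf01. (\<forall>(n,k)\<in>S. seminorm01 n k (\<lambda>x. g x - f x) < e) \<longrightarrow> g \<in> U))"

lemma FP_NB: "FP U \<longleftrightarrow> U \<subseteq> Cinf01 \<and> (\<forall>f\<in>U. NB U f)"
  unfolding FP_def NB_def by (rule refl)

lemma NB_mono: "NB U f \<Longrightarrow> U \<subseteq> V \<Longrightarrow> NB V f"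
  unfolding NB_def by blast

lemma NB_Int: assumes "NB S f" "NB T f" shows "NB (S \<inter> T) f"
proof -
    obtain S1 e1 where 1: "e1 > 0" "finite S1" "\<forall>(n,k)\<in>S1. n \<ge> 1"
      "\<forall>g\<in>Cinf01. (\<forall>(n,k)\<in>S1. seminorm01 n k (\<lambda>x. g x - f x) < e1) \<longrightarrow> g \<in> S"
      using assms(1) unfolding NB_def by blast
    obtain S2 e2 where 2: "e2 > 0" "finite S2" "\<forall>(n,k)\<in>S2. n \<ge> 1"
      "\<forall>g\<in>Cinf01. (\<forall>(n,k)\<in>S2. seminorm01 n k (\<lambda>x. g x - f x) < e2) \<longrightarrow> g \<in> T"
      using assms(2) unfolding NB_def by blast
    show ?thesis unfolding NB_def
    proof (rule exI[of _ "S1 \<union> S2"], rule exI[of _ "min e1 e2"], intro conjI)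
      show "0 < min e1 e2" "finite (S1 \<union> S2)" using 1 2 by auto
      show "\<forall>(n,k)\<in>S1 \<union> S2. n \<ge> 1" using 1(3) 2(3) by (auto simp: split_def)
      show "\<forall>g\<in>Cinf01. (\<forall>(n,k)\<in>S1 \<union> S2. seminorm01 n k (\<lambda>x. g x - f x) < min e1 e2) \<longrightarrow> g \<in> S \<inter> T"
      proof (intro ballI impI)
        fix g assume g: "g \<in> Cinf01" and h: "\<forall>(n,k)\<in>S1 \<union> S2. seminorm01 n k (\<lambda>x. g x - f x) < min e1 e2"
        have "\<forall>(n,k)\<in>S1. seminorm01 n k (\<lambda>x. g x - f x) < e1" using h by (auto simp: split_def)
        then have "g \<in> S" using 1(4) g by blast
        moreover have "\<forall>(n,k)\<in>S2. seminorm01 n k (\<lambda>x. g x - f x) < e2" using h by (auto simp: split_def)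
        then have "g \<in> T" using 2(4) g by blast
        ultimately show "g \<in> S \<inter> T" by blast
      qed
    qed
qed

lemma istop_FP: "istopology FP"
  unfolding istopology_def
proof (intro conjI allI impI)
  fix S T assume st: "FP S" "FP T"
  then show "FP (S \<inter> T)" unfolding FP_NB using NB_Int by blast
next
  fix K assume K: "\<forall>U\<in>K. FP U"
  show "FP (\<Union>K)" unfolding FP_NB
  proof (intro conjI ballI)
    show "\<Union>K \<subseteq> Cinf01" using K unfolding FP_NB by blast
    fix f assume "f \<in> \<Union>K"
    then obtain U where U: "U \<in> K" "f \<in> U" by blast
    then have "NB U f" using K unfolding FP_NB by blast
    then show "NB (\<Union>K) f" using NB_mono U by blast
  qed
qed

lemma openin_F: "openin Frechet01 = FP"
  unfolding Frechet01_def FP_def[symmetric] using istop_FP by simp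

lemma topspace_F: "topspace Frechet01 = Cinf01"
proof -
  have "FP Cinf01" unfolding FP_NB NB_def by (auto intro!: exI[of _ "{}"] exI[of _ "1::real"])
  then have "openin Frechet01 Cinf01" by (simp add: openin_F)
  moreover have "\<And>U. openin Frechet01 U \<Longrightarrow> U \<subseteq> Cinf01" by (simp add: openin_F FP_def)
  ultimately show ?thesis
    by (metis openin_subset openin_topspace subset_antisym)
qed

lemma ball_open:
  assumes f: "f \<in> Cinf01" and S: "finite S" "\<forall>(n,k)\<in>S. n \<ge> (1::nat)" and e: "e > 0"
  shows "openin Frechet01 {g\<in>Cinf01. \<forall>(n,k)\<in>S. seminorm01 n k (\<lambda>x. g x - f x) < e}"
  unfolding openin_F FP_NB NB_def
proof (intro conjI ballI)
  show "{g\<in>Cinf01. \<forall>(n,k)\<in>S. seminorm01 n k (\<lambda>x. g x - f x) < e} \<subseteq> Cinf01" by auto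
  fix g assume g: "g \<in> {g\<in>Cinf01. \<forall>(n,k)\<in>S. seminorm01 n k (\<lambda>x. g x - f x) < e}"
  define m where "m = Max (insert 0 ((\<lambda>(n,k). seminorm01 n k (\<lambda>x. g x - f x)) ` S))"
  have fin: "finite (insert 0 ((\<lambda>(n,k). seminorm01 n k (\<lambda>x. g x - f x)) ` S))" using S by simp
  have me: "m < e" unfolding m_def using g e S by (auto simp: Max_less_iff[OF fin])
  have mge: "seminorm01 n k (\<lambda>x. g x - f x) \<le> m" if "(n,k) \<in> S" for n k
    unfolding m_def using that fin by (intro Max_ge) force+
  show "\<exists>S'::(nat \<times> nat) set. \<exists>r>0. finite S' \<and> (\<forall>(n,k)\<in>S'. n \<ge> 1) \<and>
        (\<forall>h\<in>Cinf01. (\<forall>(n,k)\<in>S'. seminorm01 n k (\<lambda>x. h x - g x) < r) \<longrightarrow>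
           h \<in> {g\<in>Cinf01. \<forall>(n,k)\<in>S. seminorm01 n k (\<lambda>x. g x - f x) < e})"
  proof (rule exI[of _ S], rule exI[of _ "e - m"], intro conjI)
    show "finite S" "e - m > 0" using S me by auto
    show "\<forall>(n,k)\<in>S. n \<ge> 1" using S by auto
    show "\<forall>h\<in>Cinf01. (\<forall>(n,k)\<in>S. seminorm01 n k (\<lambda>x. h x - g x) < e - m) \<longrightarrow>
           h \<in> {g\<in>Cinf01. \<forall>(n,k)\<in>S. seminorm01 n k (\<lambda>x. g x - f x) < e}"
    proof (intro ballI impI)
    fix h assume h: "h \<in> Cinf01" and hr: "\<forall>(n,k)\<in>S. seminorm01 n k (\<lambda>x. h x - g x) < e - m"
    have gC: "g \<in> Cinf01" using g by auto
    have "seminorm01 n k (\<lambda>x. h x - f x) < e" if nk: "(n,k) \<in> S" for n k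
    proof -
      have n: "n \<ge> 1" using S nk by auto
      have "(\<lambda>x. h x - f x) = (\<lambda>x. 1 * (h x - g x) + 1 * (g x - f x))" by auto
      then have "seminorm01 n k (\<lambda>x. h x - f x) \<le> 1 * seminorm01 n k (\<lambda>x. h x - g x) + 1 * seminorm01 n k (\<lambda>x. g x - f x)"
        using sn_comb[OF diff_Cinf[OF h gC] diff_Cinf[OF gC f] n, of k 1 1] by simp
      also have "\<dots> < e"
      proof -
        have "seminorm01 n k (\<lambda>x. h x - g x) < e - m" using hr nk by (auto simp: split_def)
        then show ?thesis using mge[OF nk] by linarith
      qed
      finally show ?thesis .
    qed
    then show "h \<in> {g\<in>Cinf01. \<forall>(n,k)\<in>S. seminorm01 n k (\<lambda>x. g x - f x) < e}" using h by auto
  qed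
  qed
qed


definition uu :: "real \<Rightarrow> real" where "uu x = (if x \<in> {0<..<1} then x else 0)"

lemma q_deriv:
  "((\<lambda>y::real. if k=0 then y else if k=1 then 1 else 0) has_real_derivative
      (if Suc k=0 then x else if Suc k=1 then 1 else 0)) (at x)"
proof (cases "k = 0")
  case True then show ?thesis by (simp add: DERIV_ident)
next
  case False
  then have "(\<lambda>y::real. if k=0 then y else if k=1 then 1 else 0) = (\<lambda>y. if k = 1 then 1 else 0)" by simp
  moreover have "(if Suc k=0 then x else if Suc k=1 then 1 else 0) = (0::real)" using False by simp
  ultimately show ?thesis by (simp only:) (rule DERIV_const)
qed

lemma uu_derivs: "\<forall>x\<in>{0<..<1}. (deriv ^^ k) uu x = (if k=0 then x else if k=1 then 1 else 0)"
proof (induction k)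
  case 0 then show ?case by (simp add: uu_def)
next
  case (Suc k)
  show ?case
  proof
    fix x :: real assume x: "x \<in> {0<..<1}"
    have "((deriv ^^ k) uu has_real_derivative (if Suc k=0 then x else if Suc k=1 then 1 else 0)) (at x)"
      by (rule local_deriv[OF Suc.IH x q_deriv])
    then show "(deriv ^^ Suc k) uu x = (if Suc k=0 then x else if Suc k=1 then 1 else 0)"
      by (simp add: DERIV_imp_deriv)
  qed
qed

lemma uu_Cinf: "uu \<in> Cinf01"
proof -
  have "((deriv ^^ k) uu) differentiable (at x)" if x: "x \<in> {0<..<1}" for k x
  proof -
    have "((deriv ^^ k) uu has_real_derivative (if Suc k=0 then x else if Suc k=1 then 1 else 0)) (at x)"
      by (rule local_deriv[OF uu_derivs x q_deriv])
    then show ?thesis using real_differentiable_def by blast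
  qed
  then show ?thesis unfolding Cinf01_def by (auto simp: uu_def)
qed

lemma uu_deriv: "x \<in> {0<..<1} \<Longrightarrow> deriv uu x = 1"
  using uu_derivs[of 1] by simp

lemma D01_lower:
  assumes "f \<in> D01" shows "\<exists>r>0. \<forall>x\<in>{0<..<1}. r \<le> deriv f x"
proof -
  have "0 < (INF x\<in>{0<..<1}. ereal (deriv f x))" using assms unfolding D01_def by auto
  then obtain z where z: "0 < ereal z" "ereal z < (INF x\<in>{0<..<1}. ereal (deriv f x))"
    using ereal_dense2 by blast
  have "\<forall>x\<in>{0<..<1}. z \<le> deriv f x"
  proof
    fix x :: real assume "x \<in> {0<..<1}"
    from less_INF_D[OF z(2) this] show "z \<le> deriv f x" by simp
  qed
  moreover have "z > 0" using z(1) by simp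
  ultimately show ?thesis by blast
qed

lemma D01_intro:
  assumes "f \<in> A01" "r > 0" "\<forall>x\<in>{0<..<1}. r \<le> deriv f x"
  shows "f \<in> D01"
proof -
  have "ereal r \<le> (INF x\<in>{0<..<1}. ereal (deriv f x))"
    using assms(3) by (intro INF_greatest) simp
  then have 1: "0 < (INF x\<in>{0<..<1}. ereal (deriv f x))"
    using assms(2) by (meson ereal_less(2) less_le_trans)
  have h: "(1/2::real) \<in> {0<..<1}" by simp
  have "ereal (deriv f (1/2)) \<le> (SUP x\<in>{0<..<1}. ereal (deriv f x))"
    by (rule SUP_upper[OF h])
  moreover have "r \<le> deriv f (1/2)" using assms(3) h by blast
  then have "0 < ereal (deriv f (1/2))" using assms(2) by simp
  ultimately have 2: "0 < (SUP x\<in>{0<..<1}. ereal (deriv f x))" by (meson less_le_trans)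
  show ?thesis unfolding D01_def using assms(1) 1 2 by blast
qed

lemma uu_A01: "uu \<in> A01"
proof -
  have e1: "eventually (\<lambda>x. x = uu x) (at_left (1::real))"
    using eventually_at_left_real[of 0 1] by (auto simp: uu_def elim: eventually_mono)
  have e0: "eventually (\<lambda>x. x = uu x) (at_right (0::real))"
    using eventually_at_right_real[of 0 1] by (auto simp: uu_def elim: eventually_mono)
  have "(uu \<longlongrightarrow> 1) (at_left 1)"
    by (rule tendsto_cong[OF e1, THEN iffD1, OF tendsto_ident_at])
  moreover have "(uu \<longlongrightarrow> 0) (at_right 0)"
    by (rule tendsto_cong[OF e0, THEN iffD1, OF tendsto_ident_at])
  ultimately show ?thesis unfolding A01_def using uu_Cinf by (auto simp: uu_def)
qed

lemma uu_D01: "uu \<in> D01"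
  using D01_intro[OF uu_A01, of 1] uu_deriv by simp

lemma D01_comb:
  assumes f: "f \<in> D01" and g: "g \<in> D01" and t: "t \<in> {0..1::real}"
  shows "(\<lambda>x. (1 - t) * f x + t * g x) \<in> D01"
proof -
  have fA: "f \<in> A01" and gA: "g \<in> A01" using f g unfolding D01_def by auto
  have fC: "f \<in> Cinf01" and gC: "g \<in> Cinf01" using fA gA unfolding A01_def by auto
  have t0: "0 \<le> t" and t1: "t \<le> 1" using t by auto
  have vals: "(1 - t) * f x + t * g x \<in> {0<..<1}" if x: "x \<in> {0<..<1}" for x
  proof -
    have "f x \<in> {0<..<1}" "g x \<in> {0<..<1}" using fA gA x unfolding A01_def by auto
    then have a: "0 < f x" "f x < 1" "0 < g x" "g x < 1" by auto
    have "(1 - t) * f x + t * g x > 0"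
    proof (cases "t = 0")
      case True then show ?thesis using a by simp
    next
      case False then have "t > 0" using t0 by simp
      then show ?thesis using a t1 by (intro add_nonneg_pos) (auto intro: mult_pos_pos)
    qed
    moreover have "(1 - t) * f x + t * g x < 1"
    proof -
      have "(1 - t) * f x \<le> (1 - t) * 1" using a t1 by (intro mult_left_mono) auto
      moreover have "t * g x \<le> t * 1" using a t0 by (intro mult_left_mono) auto
      moreover have "(1 - t) * f x < (1 - t) * 1 \<or> t * g x < t * 1"
        using a t0 t1 by (cases "t = 0") auto
      ultimately show ?thesis by auto
    qed
    ultimately show ?thesis by simp
  qed
  have l1: "((\<lambda>x. (1 - t) * f x + t * g x) \<longlongrightarrow> (1 - t) * 1 + t * 1) (at_left 1)"
    using fA gA unfolding A01_def by (intro tendsto_add tendsto_mult_left) auto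
  have l0: "((\<lambda>x. (1 - t) * f x + t * g x) \<longlongrightarrow> (1 - t) * 0 + t * 0) (at_right 0)"
    using fA gA unfolding A01_def by (intro tendsto_add tendsto_mult_left) auto
  have hA: "(\<lambda>x. (1 - t) * f x + t * g x) \<in> A01"
    unfolding A01_def using comb_Cinf[OF fC gC] vals l1 l0 by simp
  obtain r where r: "r > 0" "\<forall>x\<in>{0<..<1}. r \<le> deriv f x" using D01_lower[OF f] by blast
  obtain s where s: "s > 0" "\<forall>x\<in>{0<..<1}. s \<le> deriv g x" using D01_lower[OF g] by blast
  have "min r s \<le> deriv (\<lambda>x. (1 - t) * f x + t * g x) x" if x: "x \<in> {0<..<1}" for x
  proof -
    have dv: "deriv (\<lambda>x. (1 - t) * f x + t * g x) x = (1 - t) * deriv f x + t * deriv g x"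
      using comb_derivs[OF fC gC, of 1 "1 - t" t] x by simp
    have "r \<le> deriv f x" "s \<le> deriv g x" using r s x by auto
    then have "min r s \<le> deriv f x" "min r s \<le> deriv g x" by auto
    have "(1 - t) * min r s \<le> (1 - t) * deriv f x" using \<open>min r s \<le> deriv f x\<close> t1 by (intro mult_left_mono) auto
    moreover have "t * min r s \<le> t * deriv g x" using \<open>min r s \<le> deriv g x\<close> t0 by (intro mult_left_mono) auto
    ultimately have "(1 - t) * min r s + t * min r s \<le> (1 - t) * deriv f x + t * deriv g x" by linarith
    then show ?thesis unfolding dv by (simp add: algebra_simps)
  qed
  then show ?thesis using D01_intro[OF hA, of "min r s"] r s by simp
qed


definition HH :: "real \<times> (real \<Rightarrow> real) \<Rightarrow> real \<Rightarrow> real" where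
  "HH z = (\<lambda>x. (1 - fst z) * snd z x + fst z * uu x)"

lemma D01_Cinf: "D01 \<subseteq> Cinf01"
  unfolding D01_def A01_def by auto

lemma cont_main:
  assumes U: "openin Frechet01 U"
  shows "openin (prod_topology (top_of_set {0..1}) (subtopology Frechet01 D01))
           {z \<in> {0..1} \<times> D01. HH z \<in> U}"
proof (subst openin_subopen, intro ballI)
  fix z assume z: "z \<in> {z \<in> {0..1} \<times> D01. HH z \<in> U}"
  obtain t f where tf: "z = (t, f)" by (cases z)
  have t: "t \<in> {0..1}" and fD: "f \<in> D01" and hU: "HH (t, f) \<in> U" using z tf by auto
  have fC: "f \<in> Cinf01" using fD D01_Cinf by auto
  have "NB U (HH (t, f))" using U hU unfolding openin_F FP_NB by blast
  then obtain S e where Se: "e > 0" "finite S" "\<forall>(n,k)\<in>S. n \<ge> 1"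
      "\<forall>g\<in>Cinf01. (\<forall>(n,k)\<in>S. seminorm01 n k (\<lambda>x. g x - HH (t, f) x) < e) \<longrightarrow> g \<in> U"
    unfolding NB_def by blast
  define M where "M = (\<Sum>(n,k)\<in>S. seminorm01 n k (\<lambda>x. uu x - f x))"
  have ufC: "(\<lambda>x. uu x - f x) \<in> Cinf01" by (rule diff_Cinf[OF uu_Cinf fC])
  have nonneg: "0 \<le> (\<lambda>(n,k). seminorm01 n k (\<lambda>x. uu x - f x)) p" if "p \<in> S" for p
    using that Se(3) sn_nonneg[OF ufC] by (auto simp: split_def)
  have M0: "0 \<le> M" unfolding M_def using nonneg by (intro sum_nonneg) auto
  have Mge: "seminorm01 n k (\<lambda>x. uu x - f x) \<le> M" if "(n,k) \<in> S" for n k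
    unfolding M_def using member_le_sum[OF that, of "\<lambda>(n,k). seminorm01 n k (\<lambda>x. uu x - f x)"] nonneg Se(2)
    by auto
  define d where "d = e / (2 * (M + 1))"
  have d0: "d > 0" unfolding d_def using Se(1) M0 by simp
  have dM: "d * M < e / 2"
  proof -
    have "d * M < d * (M + 1)" using d0 by simp
    also have "d * (M + 1) = e / 2" unfolding d_def using M0 by (simp add: field_simps)
    finally show ?thesis .
  qed
  define V1 where "V1 = {0..1} \<inter> {t - d <..< t + d}"
  define B where "B = {g\<in>Cinf01. \<forall>(n,k)\<in>S. seminorm01 n k (\<lambda>x. g x - f x) < e / 2}"
  have oV1: "openin (top_of_set {0..1}) V1" unfolding V1_def by (intro openin_open_Int) auto
  have oV2: "openin (subtopology Frechet01 D01) (D01 \<inter> B)"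
    unfolding B_def by (intro openin_subtopology_Int2 ball_open fC Se(2,3)) (use Se(1) in auto)
  have zin: "z \<in> V1 \<times> (D01 \<inter> B)"
  proof -
    have "t \<in> V1" unfolding V1_def using t d0 by auto
    moreover have "f \<in> B"
    proof -
      have "seminorm01 n k (\<lambda>x. f x - f x) < e / 2" if "(n,k) \<in> S" for n k
      proof -
        have "n \<ge> 1" using that Se(3) by auto
        then show ?thesis using sn_zero Se(1) by simp
      qed
      then show ?thesis unfolding B_def using fC by auto
    qed
    ultimately show ?thesis using tf fD by auto
  qed
  have sub: "V1 \<times> (D01 \<inter> B) \<subseteq> {z \<in> {0..1} \<times> D01. HH z \<in> U}"
  proof
    fix w assume w: "w \<in> V1 \<times> (D01 \<inter> B)"
    obtain s g where sg: "w = (s, g)" by (cases w)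
    have s: "s \<in> {0..1}" "\<bar>s - t\<bar> < d" using w sg unfolding V1_def by (auto simp: abs_less_iff)
    have gD: "g \<in> D01" and gB: "g \<in> B" using w sg by auto
    have gC: "g \<in> Cinf01" using gD D01_Cinf by auto
    have hC: "HH (s, g) \<in> Cinf01" unfolding HH_def using comb_Cinf[OF gC uu_Cinf] by simp
    have gfC: "(\<lambda>x. g x - f x) \<in> Cinf01" by (rule diff_Cinf[OF gC fC])
    have "seminorm01 n k (\<lambda>x. HH (s, g) x - HH (t, f) x) < e" if nk: "(n,k) \<in> S" for n k
    proof -
      have n: "n \<ge> 1" using nk Se(3) by auto
      have eq: "(\<lambda>x. HH (s, g) x - HH (t, f) x) = (\<lambda>x. (1 - s) * (g x - f x) + (s - t) * (uu x - f x))"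
        unfolding HH_def by (auto simp: algebra_simps)
      have "seminorm01 n k (\<lambda>x. HH (s, g) x - HH (t, f) x)
          \<le> \<bar>1 - s\<bar> * seminorm01 n k (\<lambda>x. g x - f x) + \<bar>s - t\<bar> * seminorm01 n k (\<lambda>x. uu x - f x)"
        unfolding eq by (rule sn_comb[OF gfC ufC n])
      also have "\<dots> < e / 2 + e / 2"
      proof (rule add_less_le_mono)
        have g2: "seminorm01 n k (\<lambda>x. g x - f x) < e / 2" using gB nk unfolding B_def by (auto simp: split_def)
        have "\<bar>1 - s\<bar> * seminorm01 n k (\<lambda>x. g x - f x) \<le> seminorm01 n k (\<lambda>x. g x - f x)"
          using s(1) sn_nonneg[OF gfC n] by (intro mult_left_le_one_le) auto
        then show "\<bar>1 - s\<bar> * seminorm01 n k (\<lambda>x. g x - f x) < e / 2" using g2 by linarith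
        have "\<bar>s - t\<bar> * seminorm01 n k (\<lambda>x. uu x - f x) \<le> d * M"
          using s(2) Mge[OF nk] sn_nonneg[OF ufC n] by (intro mult_mono) auto
        then show "\<bar>s - t\<bar> * seminorm01 n k (\<lambda>x. uu x - f x) \<le> e / 2" using dM by linarith
      qed
      finally show ?thesis by simp
    qed
    then have "HH (s, g) \<in> U" using Se(4) hC by (auto simp: split_def)
    then show "w \<in> {z \<in> {0..1} \<times> D01. HH z \<in> U}" using sg s gD by auto
  qed
  show "\<exists>T. openin (prod_topology (top_of_set {0..1}) (subtopology Frechet01 D01)) T \<and> z \<in> T \<and>
          T \<subseteq> {z \<in> {0..1} \<times> D01. HH z \<in> U}"
    using oV1 oV2 zin sub by (intro exI[of _ "V1 \<times> (D01 \<inter> B)"]) (auto simp: openin_prod_Times_iff)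
qed

theorem proposition8p1:
  shows "contractible_space (subtopology Frechet01 D01)"
proof -
  have top: "topspace (subtopology Frechet01 D01) = D01"
    using D01_Cinf by (auto simp: topspace_F)
  have img: "HH z \<in> D01" if "z \<in> {0..1} \<times> D01" for z
    using that D01_comb[OF _ uu_D01] unfolding HH_def by (cases z) auto
  have cm: "continuous_map (prod_topology (top_of_set {0..1}) (subtopology Frechet01 D01))
             (subtopology Frechet01 D01) HH"
  proof -
    let ?P = "prod_topology (top_of_set {0..1}) (subtopology Frechet01 D01)"
    have a: "HH \<in> topspace ?P \<rightarrow> topspace Frechet01"
      using img D01_Cinf by (auto simp: top topspace_F)
    have b: "HH \<in> topspace ?P \<rightarrow> D01"
      using img by (auto simp: top)
    have c: "\<forall>U. openin Frechet01 U \<longrightarrow> openin ?P {x \<in> topspace ?P. HH x \<in> U}"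
    proof -
      have td: "topspace ?P = {0..1} \<times> D01" by (simp only: topspace_prod_topology top topspace_euclidean_subtopology)
      show ?thesis unfolding td
      proof (intro allI impI)
        fix U assume "openin Frechet01 U"
        then show "openin ?P {x \<in> {0..1} \<times> D01. HH x \<in> U}" by (rule cont_main)
      qed
    qed
    have cmF: "continuous_map ?P Frechet01 HH" unfolding continuous_map_def using a c by (rule conjI)
    show ?thesis unfolding continuous_map_in_subtopology using cmF b by (rule conjI)
  qed
  have "homotopic_with (\<lambda>x. True) (subtopology Frechet01 D01) (subtopology Frechet01 D01) id (\<lambda>x. uu)"
    unfolding homotopic_with_def
  proof (rule exI[of _ HH], intro conjI allI ballI)
    show "continuous_map (prod_topology (top_of_set {0..1}) (subtopology Frechet01 D01))
             (subtopology Frechet01 D01) HH" by (rule cm)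
    fix x :: "real \<Rightarrow> real"
    show "HH (0, x) = id x" unfolding HH_def by simp
    show "HH (1, x) = uu" unfolding HH_def by simp
  qed simp
  then show ?thesis unfolding contractible_space_def by blast
qed

end
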